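(* Let $(P,\mathit{dist})$ be a finite metric space with $N=|P|\ge 2$ and doubling dimension $d$. Then the output of Algorithm $\mathrm{ClosestPair}(P,N,d)$ (for any outcome of its random choices) equals the closest-pair distance $\min\{\mathit{dist}(x,y):x,y\in P,\ x\ne y\}$ of $P$.
   Context: For $X\subseteq P$, $p\in P$ and reals $R'\ge R\ge 0$: $\mathit{ball}_X(p,R)=\{x\in X:\mathit{dist}(p,x)\le R\}$ and $\mathit{annulus}_X(p,R,R')=\{x\in X: R<\mathit{dist}(p,x)\le R'\}$. For $X\subseteq P$ with $|X|\ge2$, $\delta(X)=\min\{\mathit{dist}(x,y):x,y\in X,x\ne y\}$. The doubling dimension of $(P,\mathit{dist})$ is $\log_2\lambda$, where $\lambda$ is the smallest integer such that for every $p\in P$ and real $R>0$, $\mathit{ball}_P(p,R)$ is covered by at most $\lambda$ balls $\mathit{ball}_P(q,R/2)$ with $q\in P$; throughout, $d$ denotes the doubling dimension of the whole space $P$. Algorithm $\mathrm{SepAnn}(S,n,d,\mu,c)$: repeat: choose $p$ uniformly at random from $S$; let $R_p=\min\{r>0:|\mathit{ball}_S(p,r)|\ge n/c\}$; until $|\mathit{ball}_S(p,\mu R_p)|\le n/2$; return $p$ and $R'=R_p$. Algorithm $\mathrm{SparseSepAnn}(S,n,d,t)$: set $c=2(4e)^d$; let $(p,R')$ be the output of $\mathrm{SepAnn}(S,n,d,e,c)$; let $R_i=(1+1/t)^iR'$ ($0\le i\le t$) and $A_i=\mathit{annulus}_S(p,R_{i-1},R_i)$ ($1\le i\le t$); repeat: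 choose $i$ uniformly at random from $\{1,\dots,t\}$; until $|A_i|\le n/t$; return $p$ and $R=R_{i-1}$. Algorithm $\mathrm{ClosestPair}(S,n,d)$ (for $S\subseteq P$, $n=|S|\ge2$): if $n<2(16e)^d$, compute $\delta_0=\delta(S)$ by brute force. Otherwise: set $t=\lfloor \frac{1}{16e}(n/2)^{1/d}\rfloor$; let $(p,R)$ be the output of $\mathrm{SparseSepAnn}(S,n,d,t)$; let $S_1=\mathit{ball}_S(p,R)$, $S_2=\mathit{annulus}_S(p,R,(1+1/t)R)$, $S_3=S\setminus(S_1\cup S_2)$; compute $\delta'=\mathrm{ClosestPair}(S_1\cup S_2,|S_1\cup S_2|,d)$ and $\delta''=\mathrm{ClosestPair}(S_2\cup S_3,|S_2\cup S_3|,d)$; set $\delta_0=\min(\delta',\delta'')$. Return $\delta_0$. *)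

theory Defs
  imports Complex_Main
begin

definition sball :: "'a::metric_space set \<Rightarrow> 'a \<Rightarrow> real \<Rightarrow> 'a set" where
  "sball X p R = {x \<in> X. dist p x \<le> R}"

definition sannulus :: "'a::metric_space set \<Rightarrow> 'a \<Rightarrow> real \<Rightarrow> real \<Rightarrow> 'a set" where
  "sannulus X p R R' = {x \<in> X. R < dist p x \<and> dist p x \<le> R'}"

definition delta :: "'a::metric_space set \<Rightarrow> real" where
  "delta X = Min {dist x y | x y. x \<in> X \<and> y \<in> X \<and> x \<noteq> y}"

definition doubling_const :: "'a::metric_space set \<Rightarrow> nat" where
  "doubling_const P = (LEAST lam::nat. \<forall>p\<in>P. \<forall>R>0. \<exists>Q. Q \<subseteq> P \<and> finite Q \<and> card Q \<le> lam \<and>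
       sball P p R \<subseteq> (\<Union>q\<in>Q. sball P q (R/2)))"

definition doubling_dim :: "'a::metric_space set \<Rightarrow> real" where
  "doubling_dim P = log 2 (real (doubling_const P))"

text \<open>R is the minimum of {r > 0. |ball_S(p,r)| \<ge> theta} (if the minimum does not exist,
  there is no such R).\<close>
definition is_min_radius :: "'a::metric_space set \<Rightarrow> 'a \<Rightarrow> real \<Rightarrow> real \<Rightarrow> bool" where
  "is_min_radius S p theta R \<longleftrightarrow>
     R > 0 \<and> real (card (sball S p R)) \<ge> theta \<and>
     (\<forall>r>0. real (card (sball S p r)) \<ge> theta \<longrightarrow> R \<le> r)"

text \<open>Possible outputs (p, R') of SepAnn(S,n,d,mu,c) over all outcomes of its random
  choices (the repeat loop returns exactly those sampled p satisfying the exit test).\<close>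
definition sep_ann_out :: "'a::metric_space set \<Rightarrow> nat \<Rightarrow> real \<Rightarrow> real \<Rightarrow> 'a \<Rightarrow> real \<Rightarrow> bool" where
  "sep_ann_out S n mu c p R' \<longleftrightarrow>
     p \<in> S \<and> is_min_radius S p (real n / c) R' \<and>
     real (card (sball S p (mu * R'))) \<le> real n / 2"

definition sparse_sep_ann_out :: "'a::metric_space set \<Rightarrow> nat \<Rightarrow> real \<Rightarrow> nat \<Rightarrow> 'a \<Rightarrow> real \<Rightarrow> bool" where
  "sparse_sep_ann_out S n d t p R \<longleftrightarrow>
     (\<exists>R'. sep_ann_out S n (exp 1) (2 * (4 * exp 1) powr d) p R' \<and>
        (\<exists>i\<in>{1..t}.
           real (card (sannulus S p ((1 + 1 / real t) ^ (i - 1) * R') ((1 + 1 / real t) ^ i * R')))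
             \<le> real n / real t \<and>
           R = (1 + 1 / real t) ^ (i - 1) * R'))"

text \<open>closest_pair_out d S r: r is a possible output of ClosestPair(S,|S|,d).\<close>
inductive closest_pair_out :: "real \<Rightarrow> 'a::metric_space set \<Rightarrow> real \<Rightarrow> bool" for d :: real where
  base: "real (card S) < 2 * (16 * exp 1) powr d \<Longrightarrow> closest_pair_out d S (delta S)"
| step: "\<not> (real (card S) < 2 * (16 * exp 1) powr d) \<Longrightarrow>
         t = nat \<lfloor>(1 / (16 * exp 1)) * (real (card S) / 2) powr (1 / d)\<rfloor> \<Longrightarrow>
         sparse_sep_ann_out S (card S) d t p R \<Longrightarrow>
         S1 = sball S p R \<Longrightarrow>
         S2 = sannulus S p R ((1 + 1 / real t) * R) \<Longrightarrow>
         S3 = S - (S1 \<union> S2) \<Longrightarrow>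
         closest_pair_out d (S1 \<union> S2) d1 \<Longrightarrow>
         closest_pair_out d (S2 \<union> S3) d2 \<Longrightarrow>
         closest_pair_out d S (min d1 d2)"

end

theory Submission
  imports Defs
begin

lemma dc_prop:
  assumes "finite P"
  shows "\<forall>p\<in>P. \<forall>R>0. \<exists>Q. Q \<subseteq> P \<and> finite Q \<and> card Q \<le> doubling_const P \<and>
       sball P p R \<subseteq> (\<Union>q\<in>Q. sball P q (R/2))"
proof -
  have "\<forall>p\<in>P. \<forall>R>0. \<exists>Q. Q \<subseteq> P \<and> finite Q \<and> card Q \<le> card P \<and>
       sball P p R \<subseteq> (\<Union>q\<in>Q. sball P q (R/2))"
  proof (intro ballI allI impI)
    fix p and R :: real assume "R > 0"
    show "\<exists>Q. Q \<subseteq> P \<and> finite Q \<and> card Q \<le> card P \<and> sball P p R \<subseteq> (\<Union>q\<in>Q. sball P q (R/2))"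
      using assms \<open>R > 0\<close> by (intro exI[of _ P]) (auto simp: sball_def)
  qed
  then show ?thesis unfolding doubling_const_def by (rule LeastI)
qed

lemma cover:
  assumes "finite P" "p \<in> P" "R > 0"
  shows "\<exists>Q. Q \<subseteq> P \<and> finite Q \<and> card Q \<le> doubling_const P ^ k \<and>
       sball P p R \<subseteq> (\<Union>q\<in>Q. sball P q (R/2^k))"
proof (induction k)
  case 0
  show ?case using assms by (intro exI[of _ "{p}"]) (auto simp: sball_def)
next
  case (Suc k)
  then obtain Q where Q: "Q \<subseteq> P" "finite Q" "card Q \<le> doubling_const P ^ k"
    "sball P p R \<subseteq> (\<Union>q\<in>Q. sball P q (R/2^k))" by blast
  have "\<forall>q\<in>Q. \<exists>Q'. Q' \<subseteq> P \<and> finite Q' \<and> card Q' \<le> doubling_const P \<and>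
       sball P q (R/2^k) \<subseteq> (\<Union>q'\<in>Q'. sball P q' (R/2^k/2))"
  proof
    fix q assume "q \<in> Q"
    then have "q \<in> P" "R/2^k > 0" using Q(1) assms(3) by auto
    then show "\<exists>Q'. Q' \<subseteq> P \<and> finite Q' \<and> card Q' \<le> doubling_const P \<and>
       sball P q (R/2^k) \<subseteq> (\<Union>q'\<in>Q'. sball P q' (R/2^k/2))"
      using dc_prop[OF assms(1)] by blast
  qed
  then obtain F where F: "\<And>q. q \<in> Q \<Longrightarrow> F q \<subseteq> P \<and> finite (F q) \<and> card (F q) \<le> doubling_const P \<and>
       sball P q (R/2^k) \<subseteq> (\<Union>q'\<in>F q. sball P q' (R/2^k/2))" by metis
  define Q2 where "Q2 = (\<Union>q\<in>Q. F q)"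
  have "card Q2 \<le> (\<Sum>q\<in>Q. card (F q))" unfolding Q2_def by (rule card_UN_le[OF Q(2)])
  also have "\<dots> \<le> (\<Sum>q\<in>Q. doubling_const P)" using F by (intro sum_mono) auto
  also have "\<dots> = card Q * doubling_const P" by simp
  also have "\<dots> \<le> doubling_const P ^ k * doubling_const P" using Q(3) by simp
  finally have c: "card Q2 \<le> doubling_const P ^ Suc k" by (simp add: mult.commute)
  have "sball P p R \<subseteq> (\<Union>q\<in>Q2. sball P q (R/2^Suc k))"
  proof
    fix x assume "x \<in> sball P p R"
    then obtain q where "q \<in> Q" "x \<in> sball P q (R/2^k)" using Q(4) by blast
    then obtain q' where "q' \<in> F q" "x \<in> sball P q' (R/2^k/2)" using F[of q] by blast
    then show "x \<in> (\<Union>q\<in>Q2. sball P q (R/2^Suc k))" unfolding Q2_def using \<open>q \<in> Q\<close>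
      by (auto simp: mult.commute)
  qed
  moreover have "Q2 \<subseteq> P" "finite Q2" using F Q(2) unfolding Q2_def by auto
  ultimately show ?case using c by blast
qed

lemma card2_ex:
  assumes "card A \<ge> 2"
  shows "\<exists>x y. x \<in> A \<and> y \<in> A \<and> x \<noteq> y"
proof -
  have "finite A" using assms card.infinite by force
  then show ?thesis using assms
    by (metis One_nat_def card_le_Suc0_iff_eq not_less_eq_eq numeral_2_eq_2)
qed

lemma delta_le:
  assumes "finite X" "x \<in> X" "y \<in> X" "x \<noteq> y"
  shows "delta X \<le> dist x y"
proof -
  have "finite {dist x y | x y. x \<in> X \<and> y \<in> X \<and> x \<noteq> y}"
    by (rule finite_subset[of _ "(\<lambda>(x,y). dist x y) ` (X \<times> X)"]) (use assms(1) in auto)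
  then show ?thesis unfolding delta_def using assms by (intro Min_le) auto
qed

lemma delta_ex:
  assumes "finite X" "card X \<ge> 2"
  shows "\<exists>x y. x \<in> X \<and> y \<in> X \<and> x \<noteq> y \<and> delta X = dist x y"
proof -
  have fin: "finite {dist x y | x y. x \<in> X \<and> y \<in> X \<and> x \<noteq> y}"
    by (rule finite_subset[of _ "(\<lambda>(x,y). dist x y) ` (X \<times> X)"]) (use assms(1) in auto)
  obtain a b where "a \<in> X" "b \<in> X" "a \<noteq> b" using assms
    by (metis One_nat_def card_le_Suc0_iff_eq not_less_eq_eq numeral_2_eq_2)
  then have ne: "{dist x y | x y. x \<in> X \<and> y \<in> X \<and> x \<noteq> y} \<noteq> {}" by auto
  show ?thesis using Min_in[OF fin ne] unfolding delta_def by auto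
qed

lemma delta_mono:
  assumes "finite X" "Y \<subseteq> X" "card Y \<ge> 2"
  shows "delta X \<le> delta Y"
proof -
  have "finite Y" using assms finite_subset by blast
  then obtain x y where "x \<in> Y" "y \<in> Y" "x \<noteq> y" "delta Y = dist x y"
    using delta_ex assms(3) by blast
  then show ?thesis using delta_le[OF assms(1)] assms(2) by auto
qed

lemma two_elems:
  assumes "x \<in> A" "y \<in> A" "x \<noteq> y" "finite A"
  shows "card A \<ge> 2"
proof -
  have "card {x,y} \<le> card A" using assms by (intro card_mono) auto
  then show ?thesis using assms by simp
qed

lemma step_key:
  fixes S P :: "'a::metric_space set"
  assumes finP: "finite P" and SP: "S \<subseteq> P" and cS: "card S \<ge> 2"
    and dd: "d = doubling_dim P"
    and nb: "\<not> (real (card S) < 2 * (16 * exp 1) powr d)"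
    and tdef: "t = nat \<lfloor>(1 / (16 * exp 1)) * (real (card S) / 2) powr (1 / d)\<rfloor>"
    and sp: "sparse_sep_ann_out S (card S) d t p R"
    and S1: "S1 = sball S p R"
    and S2: "S2 = sannulus S p R ((1 + 1 / real t) * R)"
    and S3: "S3 = S - (S1 \<union> S2)"
  shows "card (S1 \<union> S2) \<ge> 2 \<and> card (S2 \<union> S3) \<ge> 2 \<and>
         delta S = min (delta (S1 \<union> S2)) (delta (S2 \<union> S3))"
proof -
  define n where "n = card S"
  define lam where "lam = doubling_const P"
  define c where "c = 2 * (4 * exp 1) powr d"
  define q where "q = 1 + 1 / real t"
  have finS: "finite S" using finP SP finite_subset by blast
  obtain R' i where sa: "sep_ann_out S n (exp 1) c p R'" and i: "i \<in> {1..t}"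
    and RR: "R = q ^ (i - 1) * R'"
    using sp unfolding sparse_sep_ann_out_def n_def c_def q_def by blast
  have t1: "t \<ge> 1" using i by auto
  have pS: "p \<in> S" and R'pos: "R' > 0" and big: "real (card (sball S p R')) \<ge> real n / c"
    and small: "real (card (sball S p (exp 1 * R'))) \<le> real n / 2"
    using sa unfolding sep_ann_out_def is_min_radius_def by auto
  have d0: "d \<ge> 0"
  proof (cases "lam = 0")
    case True then show ?thesis using dd unfolding doubling_dim_def lam_def by (simp add: log_def)
  next
    case False then show ?thesis using dd unfolding doubling_dim_def lam_def by simp
  qed
  have npos: "real n / 2 > 0" using cS n_def by simp
  have dpos: "d > 0"
  proof (rule ccontr)
    assume "\<not> d > 0"
    then have "d = 0" using d0 by simp
    then have "t = nat \<lfloor>1 / (16 * exp (1::real))\<rfloor>" using tdef npos n_def by simp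
    moreover have "1 / (16 * exp 1) < (1::real)"
    proof -
      have "exp (1::real) \<ge> 1" by simp
      then have "16 * exp (1::real) > 1" by linarith
      then show ?thesis by simp
    qed
    moreover have "1 / (16 * exp 1) \<ge> (0::real)" by simp
    ultimately have "t = 0" by linarith
    then show False using t1 by simp
  qed
  have lam1: "lam > 1"
  proof (rule ccontr)
    assume "\<not> lam > 1"
    then have "lam = 0 \<or> lam = 1" by auto
    then have "d = 0" using dd unfolding doubling_dim_def lam_def by (auto simp: log_def)
    then show False using dpos by simp
  qed
  have lamd: "real lam = 2 powr d" using dd lam1 unfolding doubling_dim_def lam_def by simp
  have tle: "real t \<le> (1 / (16 * exp 1)) * (real n / 2) powr (1 / d)"
  proof -
    have "(1 / (16 * exp 1)) * (real n / 2) powr (1 / d) \<ge> 0" by simp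
    then show ?thesis unfolding tdef n_def by linarith
  qed
  define k where "k = (LEAST k::nat. 2 * t \<le> 2 ^ k)"
  have ex: "2 * t \<le> 2 ^ (2 * t)" using less_exp[of "2*t"] by simp
  have k1: "2 * t \<le> 2 ^ k" unfolding k_def by (rule LeastI[of "\<lambda>k. 2 * t \<le> 2 ^ k", OF ex])
  have kpos: "k \<ge> 1"
  proof (rule ccontr)
    assume "\<not> k \<ge> 1" then have "k = 0" by simp
    then show False using k1 t1 by simp
  qed
  have "\<not> 2 * t \<le> 2 ^ (k - 1)" unfolding k_def
    by (rule not_less_Least) (use kpos k_def in simp)
  then have k2: "2 ^ k < 4 * t" using kpos
    by (metis One_nat_def Suc_pred less_one linorder_not_le mult_2 not_less_eq numeral_Bit0 power_Suc
        mult_less_mono2 zero_less_numeral mult.assoc)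
  have tpos: "real t > 0" using t1 by simp
  have lamk: "real lam ^ k < real n / c"
  proof -
    have "real lam ^ k = (2 powr d) ^ k" using lamd by simp
    also have "\<dots> = (2 ^ k) powr d"
      by (simp add: powr_realpow[symmetric] powr_powr mult.commute)
    also have "\<dots> < (4 * real t) powr d"
    proof -
      have "real (2 ^ k) < real (4 * t)" using k2 by (simp only: of_nat_less_iff)
      then have "(2::real) ^ k < 4 * real t" by simp
      then show ?thesis using dpos by (intro powr_less_mono2) auto
    qed
    also have "\<dots> \<le> ((real n / 2) powr (1 / d) / (4 * exp 1)) powr d"
      using tle dpos tpos by (intro powr_mono2) (auto simp: field_simps)
    also have "\<dots> = ((real n / 2) powr (1 / d)) powr d / (4 * exp 1) powr d"
      by (rule powr_divide)
    also have "\<dots> = (real n / 2) / (4 * exp 1) powr d"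
      using dpos npos by (simp add: powr_powr)
    also have "\<dots> = real n / c" unfolding c_def by simp
    finally show ?thesis .
  qed
  obtain Q where Q: "Q \<subseteq> P" "finite Q" "card Q \<le> lam ^ k"
    "sball P p R' \<subseteq> (\<Union>q\<in>Q. sball P q (R'/2^k))"
    using cover[OF finP _ R'pos, of p k] pS SP unfolding lam_def by blast
  define A where "A = sball S p R'"
  have finA: "finite A" unfolding A_def sball_def using finS by simp
  have "\<exists>z\<in>Q. card (sball P z (R'/2^k) \<inter> A) \<ge> 2"
  proof (rule ccontr)
    assume "\<not> ?thesis"
    then have le1: "\<And>z. z \<in> Q \<Longrightarrow> card (sball P z (R'/2^k) \<inter> A) \<le> 1" by force
    have "A \<subseteq> (\<Union>z\<in>Q. sball P z (R'/2^k) \<inter> A)" using Q(4) SP unfolding A_def sball_def by blast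
    then have "card A \<le> card (\<Union>z\<in>Q. sball P z (R'/2^k) \<inter> A)"
      using finA by (intro card_mono) auto
    also have "\<dots> \<le> (\<Sum>z\<in>Q. card (sball P z (R'/2^k) \<inter> A))" by (rule card_UN_le[OF Q(2)])
    also have "\<dots> \<le> (\<Sum>z\<in>Q. 1)" using le1 by (intro sum_mono) auto
    also have "\<dots> = card Q" by simp
    also have "\<dots> \<le> lam ^ k" by (rule Q(3))
    finally have "real (card A) \<le> real lam ^ k" by (metis of_nat_le_iff of_nat_power)
    then show False using lamk big unfolding A_def by linarith
  qed
  then obtain z where z: "card (sball P z (R'/2^k) \<inter> A) \<ge> 2" by blast
  then obtain x y where xy: "x \<in> sball P z (R'/2^k) \<inter> A" "y \<in> sball P z (R'/2^k) \<inter> A" "x \<noteq> y"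
    using card2_ex by blast
  have "dist x y \<le> dist z x + dist z y" by (metis dist_commute dist_triangle)
  also have "\<dots> \<le> 2 * (R' / 2^k)" using xy unfolding sball_def by auto
  also have "\<dots> \<le> R' / real t"
  proof -
    have "2 * real t \<le> 2 ^ k" using k1 by (metis of_nat_le_iff of_nat_mult of_nat_numeral of_nat_power)
    then show ?thesis using R'pos tpos by (simp add: field_simps)
  qed
  finally have dxy: "dist x y \<le> R' / real t" .
  have q1: "q \<ge> 1" unfolding q_def by simp
  have RR': "R' \<le> R" unfolding RR using R'pos q1 by (simp add: one_le_power)
  have Rpos: "R > 0" using RR' R'pos by simp
  have deltaS: "delta S \<le> R / real t"
  proof -
    have "delta S \<le> dist x y" using xy unfolding A_def sball_def by (intro delta_le[OF finS]) auto
    also have "\<dots> \<le> R' / real t" by (rule dxy)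
    also have "\<dots> \<le> R / real t" using RR' tpos by (simp add: divide_right_mono)
    finally show ?thesis .
  qed
  have RqR: "R \<le> q * R" using q1 Rpos by simp
  have S1S2: "S1 \<union> S2 = sball S p (q * R)"
    unfolding S1 S2 q_def[symmetric] sball_def sannulus_def using RqR by force
  have qR: "q * R \<le> exp 1 * R'"
  proof -
    have "q * R = q ^ i * R'" unfolding RR using i by (cases i) auto
    also have "\<dots> \<le> q ^ t * R'" using i q1 R'pos by (intro mult_right_mono power_increasing) auto
    also have "q ^ t \<le> exp (1 / real t) ^ t" unfolding q_def
      by (intro power_mono) (auto simp: add.commute exp_ge_add_one_self)
    also have "exp (1 / real t) ^ t = exp 1" using tpos by (simp add: exp_of_nat_mult[symmetric])
    finally show ?thesis using R'pos by simp
  qed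
  have c12: "card (S1 \<union> S2) \<ge> 2"
  proof -
    have "x \<in> S1 \<union> S2" "y \<in> S1 \<union> S2" using xy RR' unfolding S1 A_def sball_def by auto
    then show ?thesis using xy(3) finS unfolding S1 S2 sball_def sannulus_def by (intro two_elems) auto
  qed
  have "card (S1 \<union> S2) \<le> card (sball S p (exp 1 * R'))"
    unfolding S1S2 using qR finS by (intro card_mono) (auto simp: sball_def)
  then have c12u: "real (card (S1 \<union> S2)) \<le> real n / 2" using small by linarith
  have S3eq: "S2 \<union> S3 \<supseteq> S - (S1 \<union> S2)" unfolding S3 by auto
  have "card (S - (S1 \<union> S2)) = n - card (S1 \<union> S2)"
    unfolding n_def by (rule card_Diff_subset) (auto simp: S1 S2 sball_def sannulus_def finS)
  moreover have "card (S1 \<union> S2) \<le> n" unfolding n_def S1S2 using finS by (intro card_mono) (auto simp: sball_def)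
  moreover have "real n \<ge> 3"
  proof -
    have "(16 * exp 1) powr d > (1::real)"
    proof -
      have "exp (1::real) \<ge> 1" by simp
      then have "16 * exp (1::real) > 1" by linarith
      then show ?thesis using dpos by (intro gr_one_powr) auto
    qed
    then have "real n > 2" using nb unfolding n_def by linarith
    then have "n \<ge> 3" by linarith
    then show ?thesis by simp
  qed
  ultimately have "real (card (S - (S1 \<union> S2))) \<ge> 3/2" using c12u by linarith
  then have "card (S - (S1 \<union> S2)) \<ge> 2" by linarith
  moreover have "card (S2 \<union> S3) \<ge> card (S - (S1 \<union> S2))"
    using S3eq finS by (intro card_mono) (auto simp: S2 S3 sannulus_def)
  ultimately have c23: "card (S2 \<union> S3) \<ge> 2" by linarith
  have sub12: "S1 \<union> S2 \<subseteq> S" and sub23: "S2 \<union> S3 \<subseteq> S" unfolding S1 S2 S3 sball_def sannulus_def by auto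
  have fin12: "finite (S1 \<union> S2)" using sub12 finS finite_subset by blast
  have fin23: "finite (S2 \<union> S3)" using sub23 finS finite_subset by blast
  have m1: "delta S \<le> delta (S1 \<union> S2)" by (rule delta_mono[OF finS sub12 c12])
  have m2: "delta S \<le> delta (S2 \<union> S3)" by (rule delta_mono[OF finS sub23 c23])
  obtain a b where ab: "a \<in> S" "b \<in> S" "a \<noteq> b" "delta S = dist a b" using delta_ex[OF finS cS] by blast
  have cross: "dist u v > R / real t" if "u \<in> S1" "v \<in> S3" for u v
  proof -
    have "dist p v > q * R" "dist p u \<le> R" using that unfolding S1 S2 S3 sball_def sannulus_def q_def by auto
    moreover have "dist p v \<le> dist p u + dist u v" by (rule dist_triangle)
    ultimately have "dist u v > q * R - R" by linarith
    moreover have "q * R - R = R / real t" unfolding q_def by (simp add: field_simps)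
    ultimately show ?thesis by simp
  qed
  have "delta S \<ge> delta (S1 \<union> S2) \<or> delta S \<ge> delta (S2 \<union> S3)"
  proof (cases "a \<in> S1 \<union> S2 \<and> b \<in> S1 \<union> S2")
    case True
    then have "delta (S1 \<union> S2) \<le> dist a b" using ab by (intro delta_le[OF fin12]) auto
    then show ?thesis using ab by simp
  next
    case False
    then have "a \<in> S3 \<or> b \<in> S3" using ab unfolding S3 by auto
    moreover have "\<not> (a \<in> S1 \<and> b \<in> S3)" "\<not> (b \<in> S1 \<and> a \<in> S3)"
      using cross[of a b] cross[of b a] deltaS ab by (auto simp: dist_commute)
    ultimately have "a \<in> S2 \<union> S3 \<and> b \<in> S2 \<union> S3" using ab unfolding S3 by auto
    then have "delta (S2 \<union> S3) \<le> dist a b" using ab by (intro delta_le[OF fin23]) auto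
    then show ?thesis using ab by simp
  qed
  then show ?thesis using m1 m2 c12 c23 by linarith
qed


lemma main:
  assumes "closest_pair_out d S r"
  shows "finite P \<Longrightarrow> S \<subseteq> P \<Longrightarrow> card S \<ge> 2 \<Longrightarrow> d = doubling_dim P \<Longrightarrow> r = delta S"
  using assms
proof (induction rule: closest_pair_out.induct)
  case (base S)
  then show ?case by simp
next
  case (step S t p R S1 S2 S3 d1 d2)
  have key: "card (S1 \<union> S2) \<ge> 2 \<and> card (S2 \<union> S3) \<ge> 2 \<and>
         delta S = min (delta (S1 \<union> S2)) (delta (S2 \<union> S3))"
    by (rule step_key[OF step.prems(1,2,3,4) step.hyps(1,2,3,4,5,6)])
  have "S1 \<union> S2 \<subseteq> P" "S2 \<union> S3 \<subseteq> P" using step.prems(2) step.hyps(4,5,6)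
    unfolding sball_def sannulus_def by auto
  then have "d1 = delta (S1 \<union> S2)" "d2 = delta (S2 \<union> S3)"
    using step.IH step.prems key by auto
  then show ?case using key by simp
qed

theorem corollary1:
  fixes P :: "'a::metric_space set" and r :: real
  assumes "finite P" and "card P \<ge> 2"
    and "closest_pair_out (doubling_dim P) P r"
  shows "r = Min {dist x y | x y. x \<in> P \<and> y \<in> P \<and> x \<noteq> y}"
  using main[OF assms(3) assms(1) _ assms(2)] unfolding delta_def by simp

end
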